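(* Let $a,b>0$, $c\ge 0$, $s_0>1$, and let $(u_0,v_0)$ with $u_0,v_0>0$ satisfy $$u_0^3+cu_0=\frac{a+1}{b}u_0^2+\frac{ac}{b},\qquad v_0=u_0^2+c .$$ Consider, for the parameter $\gamma>0$, the delay differential system $$u'(t)=\gamma\left\{\frac{[u(t)+u_0]^2}{v(t-s_0)+v_0}-b[u(t)+u_0]+a\right\},\qquad v'(t)=\gamma\left\{[u(t-1)+u_0]^2-[v(t)+v_0]+c\right\},$$ which has the equilibrium $(u,v)=(0,0)$. Put $$b_0=b-\frac{2u_0}{v_0},\quad b_1=b_0+1,\quad b_2=\frac{2u_0^3}{v_0^2},\quad \tau=\frac{s_0+1}{2},$$ and let $M(\lambda,\gamma)=\lambda^2+\gamma b_1\lambda+\gamma^2 b_0+\gamma^2 b_2e^{-2\tau\lambda}$ be the characteristic function of the linearization at $0$. (i) Suppose $b_1\neq 0$ and $b_0^2-b_2^2<0$. Let $\delta=b_1^2(b_1^2-4b_0)+4b_2^2$, $\Omega_+=\dfrac{-b_1^2+\sqrt{\delta}}{2b_2}$, let $$\omega_0=\frac{\arccos(\Omega_+)+2\pi j}{2\tau}$$ for some $j\in\mathbb{Z}$, where the branch of $\arccos$ is chosen so that $\omega_0>0$ and $\sin(2\omega_0\tau)$ has the same sign as $b_1$, and let $$\gamma_0=\frac{b_1\omega_0}{b_2\sin(2\omega_0\tau)} .$$ (ii) Alternatively, suppose $b_1=0$ and $b_2>1$, and for some $k\in\mathbb{N}$ let $$\gamma_0=\frac{k\pi}{\tau\sqrt{b_2-1}},\qquad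 \omega_0=\frac{k\pi}{\tau}.$$ In either case the system undergoes a Hopf bifurcation at $\gamma=\gamma_0$ with frequency $\omega_0$: $\lambda=i\omega_0$ is a root of $M(\lambda,\gamma_0)=0$, this root is simple, the transversality condition $$\operatorname{Re}\left(\frac{d\lambda}{d\gamma}\right)\Big|_{\lambda=i\omega_0,\ \gamma=\gamma_0}=\frac{4\tau\gamma_0\omega_0^4+2\tau\gamma_0^3\omega_0^2(b_1^2-2b_0)}{(\gamma_0^2b_1-2\gamma_0\tau\omega_0^2+2\gamma_0^3\tau b_0)^2+(2\gamma_0\omega_0+2\gamma_0^2\tau b_1\omega_0)^2}>0$$ holds (where $\lambda(\gamma)$ is the root branch through $i\omega_0$), and no $ni\omega_0$ with $n\in\mathbb{Z}\setminus\{\pm1\}$ is a root of $M(\lambda,\gamma_0)=0$.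
   Context: The characteristic function $M(\lambda,\gamma)$ is the determinant of the characteristic matrix $\Delta(\lambda,\gamma)=\lambda I_2-\gamma(A+e^{-\lambda}B_1+e^{-\lambda s_0}B_2)$, where $A=\begin{pmatrix}\frac{2u_0}{v_0}-b&0\\0&-1\end{pmatrix}$, $B_1=\begin{pmatrix}0&0\\2u_0&0\end{pmatrix}$, $B_2=\begin{pmatrix}0&-\frac{u_0^2}{v_0^2}\\0&0\end{pmatrix}$ are the partial Jacobians of the right-hand side at $0$ with respect to the undelayed state, the state delayed by $1$, and the state delayed by $s_0$, respectively. *)

theory Defs
  imports "HOL-Analysis.Analysis"
begin

text \<open>Partial Jacobians of the right-hand side at the equilibrium 0 (complexified),
  with respect to the undelayed state, the state delayed by 1 and the state delayed by s0.\<close>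

definition jacA :: "real \<Rightarrow> real \<Rightarrow> real \<Rightarrow> complex^2^2" where
  "jacA b u0 v0 = vector [vector [complex_of_real (2 * u0 / v0 - b), 0], vector [0, -1]]"

definition jacB1 :: "real \<Rightarrow> complex^2^2" where
  "jacB1 u0 = vector [vector [0, 0], vector [complex_of_real (2 * u0), 0]]"

definition jacB2 :: "real \<Rightarrow> real \<Rightarrow> complex^2^2" where
  "jacB2 u0 v0 = vector [vector [0, complex_of_real (- (u0^2 / v0^2))], vector [0, 0]]"

definition char_matrix :: "real \<Rightarrow> real \<Rightarrow> real \<Rightarrow> real \<Rightarrow> complex \<Rightarrow> real \<Rightarrow> complex^2^2" where
  "char_matrix b u0 v0 s0 lam gam =
     mat lam - (\<chi> i j. complex_of_real gam *
        (jacA b u0 v0 $ i $ j + exp (- lam) * jacB1 u0 $ i $ j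
         + exp (- lam * complex_of_real s0) * jacB2 u0 v0 $ i $ j))"

definition char_fun :: "real \<Rightarrow> real \<Rightarrow> real \<Rightarrow> real \<Rightarrow> complex \<Rightarrow> real \<Rightarrow> complex" where
  "char_fun b u0 v0 s0 lam gam = det (char_matrix b u0 v0 s0 lam gam)"

text \<open>Derivative of the root branch lambda(gamma) of M(lambda,gamma)=0, obtained by

  d lambda / d gamma = - (dM/dgamma) / (dM/dlambda) (implicit differentiation along the root branch)

\<close>

definition dlam_dgam :: "(complex \<Rightarrow> real \<Rightarrow> complex) \<Rightarrow> complex \<Rightarrow> real \<Rightarrow> complex" where
  "dlam_dgam M lam gam = - vector_derivative (\<lambda>g. M lam g) (at gam) / deriv (\<lambda>l. M l gam) lam"

end

theory Submission imports Defs begin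


definition FF :: "real \<Rightarrow> real \<Rightarrow> real \<Rightarrow> real \<Rightarrow> complex \<Rightarrow> complex \<Rightarrow> complex" where
  "FF b0 b1 b2 s0 l z = l^2 + z * of_real b1 * l + z^2 * of_real b0 + z^2 * of_real b2 * exp (- l * of_real (s0 + 1))"

lemma char_fun_FF:
  assumes "v0 \<noteq> 0"
  shows "char_fun b u0 v0 s0 l g = FF (b - 2*u0/v0) (b - 2*u0/v0 + 1) (2*u0^3/v0^2) s0 l (of_real g)"
  unfolding char_fun_def char_matrix_def FF_def det_2 jacA_def jacB1_def jacB2_def
  apply (simp add: mat_def)
  apply (simp add: algebra_simps power2_eq_square power3_eq_cube add_divide_distrib flip: exp_add)
  done



lemma exp_iw: "exp (- (\<i> * complex_of_real w) * complex_of_real t) = Complex (cos (w * t)) (- sin (w * t))"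
  by (simp add: complex_eq_iff Re_exp Im_exp)

lemma FF_iw: "FF b0 b1 b2 s0 (\<i> * of_real w) (of_real g) =
   Complex (g^2 * b0 + g^2 * b2 * cos (w * (s0+1)) - w^2) (g * b1 * w - g^2 * b2 * sin (w * (s0+1)))"
  unfolding FF_def exp_iw by (simp add: complex_eq_iff power2_eq_square)

lemma FF_dl: "((\<lambda>l. FF b0 b1 b2 s0 l z) has_field_derivative
   (2 * l + z * of_real b1 - z^2 * of_real b2 * of_real (s0+1) * exp (- l * of_real (s0 + 1)))) (at l)"
  unfolding FF_def by (auto intro!: derivative_eq_intros simp: algebra_simps)

lemma FF_dg: "((\<lambda>g. FF b0 b1 b2 s0 l (of_real g)) has_vector_derivative
   (l * of_real b1 + 2 * of_real g * of_real b0 + 2 * of_real g * of_real b2 * exp (- l * of_real (s0 + 1)))) (at g)"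
  unfolding FF_def
  by (rule has_vector_derivative_real_field) (auto intro!: derivative_eq_intros simp: algebra_simps)

lemma dl_iw: "(2 * (\<i> * of_real w) + of_real g * of_real b1 - (of_real g)^2 * of_real b2 * of_real (s0+1) * exp (- (\<i> * of_real w) * of_real (s0 + 1)))
  = Complex (g * b1 - g^2 * b2 * (s0+1) * cos (w * (s0+1))) (2 * w + g^2 * b2 * (s0+1) * sin (w * (s0+1)))"
  unfolding exp_iw by (simp add: complex_eq_iff power2_eq_square)

lemma dg_iw: "((\<i> * of_real w) * of_real b1 + 2 * of_real g * of_real b0 + 2 * of_real g * of_real b2 * exp (- (\<i> * of_real w) * of_real (s0 + 1)))
  = Complex (2 * g * b0 + 2 * g * b2 * cos (w * (s0+1))) (b1 * w - 2 * g * b2 * sin (w * (s0+1)))"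
  unfolding exp_iw by (simp add: complex_eq_iff power2_eq_square)



lemma transv:
  fixes g w tau b0 b1 b2 C S :: real
  assumes g: "g > 0" and w: "w > 0" and tau: "tau > 0"
    and R: "w^2 = g^2 * (b0 + b2 * C)" and I: "b1 * w = g * b2 * S"
    and P: "2 * w^2 + g^2 * (b1^2 - 2 * b0) > 0"
  shows "Complex (g * b1 - g^2 * b2 * (2 * tau) * C) (2 * w + g^2 * b2 * (2 * tau) * S) \<noteq> 0
    \<and> Re (- Complex (2 * g * b0 + 2 * g * b2 * C) (b1 * w - 2 * g * b2 * S)
          / Complex (g * b1 - g^2 * b2 * (2 * tau) * C) (2 * w + g^2 * b2 * (2 * tau) * S))
       = (4 * tau * g * w^4 + 2 * tau * g^3 * w^2 * (b1^2 - 2 * b0))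
          / ((g^2 * b1 - 2 * g * tau * w^2 + 2 * g^3 * tau * b0)^2
             + (2 * g * w + 2 * g^2 * tau * b1 * w)^2)
    \<and> (4 * tau * g * w^4 + 2 * tau * g^3 * w^2 * (b1^2 - 2 * b0))
          / ((g^2 * b1 - 2 * g * tau * w^2 + 2 * g^3 * tau * b0)^2
             + (2 * g * w + 2 * g^2 * tau * b1 * w)^2) > 0"
proof -
  define p where "p = g * b1 - g^2 * b2 * (2 * tau) * C"
  define q where "q = 2 * w + g^2 * b2 * (2 * tau) * S"
  define a where "a = 2 * g * b0 + 2 * g * b2 * C"
  define c where "c = b1 * w - 2 * g * b2 * S"
  define N where "N = 4 * tau * g * w^4 + 2 * tau * g^3 * w^2 * (b1^2 - 2 * b0)"
  define D where "D = (g^2 * b1 - 2 * g * tau * w^2 + 2 * g^3 * tau * b0)^2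
             + (2 * g * w + 2 * g^2 * tau * b1 * w)^2"
  have R': "g^2 * b2 * C = w^2 - g^2 * b0" using R by (simp add: algebra_simps)
  have gp: "g * p = g^2 * b1 - 2 * g * tau * w^2 + 2 * g^3 * tau * b0"
  proof -
    have "g * p = g^2 * b1 - 2 * tau * g * (g^2 * b2 * C)"
      unfolding p_def by (simp add: algebra_simps power2_eq_square)
    also have "\<dots> = g^2 * b1 - 2 * g * tau * w^2 + 2 * g^3 * tau * b0"
      unfolding R' by (simp add: algebra_simps power2_eq_square power3_eq_cube)
    finally show ?thesis .
  qed
  have gq: "g * q = 2 * g * w + 2 * g^2 * tau * b1 * w"
  proof -
    have "g * q = 2 * g * w + 2 * tau * g^2 * (g * b2 * S)"
      unfolding q_def by (simp add: algebra_simps power2_eq_square)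
    also have "\<dots> = 2 * g * w + 2 * g^2 * tau * b1 * w"
      unfolding I[symmetric] by (simp add: algebra_simps)
    finally show ?thesis .
  qed
  have ga: "g * a = 2 * w^2"
  proof -
    have "g * a = 2 * g^2 * b0 + 2 * (g^2 * b2 * C)"
      unfolding a_def by (simp add: algebra_simps power2_eq_square)
    then show ?thesis unfolding R' by simp
  qed
  have gc: "g * c = - g * b1 * w"
  proof -
    have "g * c = g * b1 * w - 2 * g * (g * b2 * S)"
      unfolding c_def by (simp add: algebra_simps)
    then show ?thesis unfolding I[symmetric] by simp
  qed
  have D: "D = g^2 * (p^2 + q^2)"
    unfolding D_def gp[symmetric] gq[symmetric] by (simp add: algebra_simps power2_eq_square)
  have "g^2 * (a * p + c * q) = (g * a) * (g * p) + (g * c) * (g * q)"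
    by (simp add: algebra_simps power2_eq_square)
  also have "\<dots> = - N"
    unfolding ga gc gp gq N_def by (simp add: algebra_simps power2_eq_square power3_eq_cube power4_eq_xxxx)
  finally have apcq: "g^2 * (a * p + c * q) = - N" .
  have Nfac: "N = 2 * tau * g * w^2 * (2 * w^2 + g^2 * (b1^2 - 2 * b0))"
    unfolding N_def by (simp add: algebra_simps power2_eq_square power3_eq_cube power4_eq_xxxx)
  have Npos: "N > 0" unfolding Nfac using g w tau P by (intro mult_pos_pos) auto
  have pq: "p^2 + q^2 \<noteq> 0"
  proof
    assume "p^2 + q^2 = 0"
    then have "p = 0" "q = 0" by (auto simp: sum_power2_eq_zero_iff)
    then show False using apcq Npos by simp
  qed
  have Dpos: "D > 0" unfolding D using pq g
    by (simp add: sum_power2_gt_zero_iff)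
  have ne: "Complex p q \<noteq> 0" using pq by (auto simp: complex_eq_iff)
  have "Re (- Complex a c / Complex p q) = - (a * p + c * q) / (p^2 + q^2)"
    by (simp add: Re_divide diff_divide_distrib add_divide_distrib)
  also have "\<dots> = N / D"
  proof -
    have "N / D = (- (g^2 * (a * p + c * q))) / (g^2 * (p^2 + q^2))" unfolding D apcq by simp
    also have "\<dots> = - (a * p + c * q) / (p^2 + q^2)" using g by (simp add: diff_divide_distrib add_divide_distrib)
    finally show ?thesis by simp
  qed
  finally have "Re (- Complex a c / Complex p q) = N / D" .
  with ne Npos Dpos show ?thesis unfolding p_def q_def a_def c_def N_def D_def
    by simp
qed



lemma case1:
  fixes b0 b1 b2 \<tau> s0 \<delta> \<Omega>p \<gamma>0 \<omega>0 :: real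
  assumes b2: "b2 > 0" and tau: "\<tau> > 0" and s0: "s0 + 1 = 2 * \<tau>"
    and "\<delta> = b1^2 * (b1^2 - 4 * b0) + 4 * b2^2"
    and "\<Omega>p = (- (b1^2) + sqrt \<delta>) / (2 * b2)"
    and b1: "b1 \<noteq> 0" and b02: "b0^2 - b2^2 < 0"
    and ex: "\<exists>j::int. \<exists>\<sigma>\<in>{1, -1::real}. 2 * \<tau> * \<omega>0 = \<sigma> * arccos \<Omega>p + 2 * pi * of_int j"
    and w: "\<omega>0 > 0" and sg: "sgn (sin (2 * \<omega>0 * \<tau>)) = sgn b1"
    and g: "\<gamma>0 = b1 * \<omega>0 / (b2 * sin (2 * \<omega>0 * \<tau>))"
  shows "\<gamma>0 > 0 \<and> \<omega>0^2 = \<gamma>0^2 * (b0 + b2 * cos (\<omega>0 * (s0 + 1)))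
     \<and> b1 * \<omega>0 = \<gamma>0 * b2 * sin (\<omega>0 * (s0 + 1))
     \<and> 2 * \<omega>0^2 + \<gamma>0^2 * (b1^2 - 2 * b0) > 0
     \<and> (\<forall>n::int. (of_int n * \<omega>0)^2 = \<gamma>0^2 * (b0 + b2 * cos (of_int n * \<omega>0 * (s0 + 1)))
          \<and> b1 * (of_int n * \<omega>0) = \<gamma>0 * b2 * sin (of_int n * \<omega>0 * (s0 + 1)) \<longrightarrow> n^2 = 1)"
proof -
  have th: "\<omega>0 * (s0 + 1) = 2 * \<omega>0 * \<tau>" using s0 by simp
  have hb: "- b2 < b0 \<and> b0 < b2"
  proof -
    have "(b0 - b2) * (b0 + b2) < 0" using b02 by (simp add: algebra_simps power2_eq_square)
    then show ?thesis using b2 by (auto simp: mult_less_0_iff)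
  qed
  have b1sq: "b1^2 > 0" using b1 by simp
  have dpos: "\<delta> > 0"
  proof -
    have "\<delta> = (b1^2 - 2 * b0)^2 + 4 * (b2^2 - b0^2)" using assms(4) by (simp add: algebra_simps power2_eq_square)
    moreover have "(b1^2 - 2 * b0)^2 \<ge> 0" by simp
    ultimately show ?thesis using b02
      by (smt (verit))
  qed
  define sq where "sq = sqrt \<delta>"
  have sq2: "sq^2 = \<delta>" unfolding sq_def using dpos by simp
  have sqpos: "sq > 0" unfolding sq_def using dpos by simp
  have Om: "2 * b2 * \<Omega>p + b1^2 = sq" using assms(5) b2 unfolding sq_def by (simp add: field_simps)
  have up: "\<Omega>p \<le> 1"
  proof -
    have "\<delta> \<le> (2 * b2 + b1^2)^2"
    proof -
      have "(2 * b2 + b1^2)^2 - \<delta> = 4 * b1^2 * (b0 + b2)" using assms(4) by (simp add: algebra_simps power2_eq_square)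
      moreover have "4 * b1^2 * (b0 + b2) \<ge> 0" using hb by simp
      ultimately show ?thesis by linarith
    qed
    then have "sq \<le> 2 * b2 + b1^2" unfolding sq_def using b2 by (intro real_le_lsqrt) auto
    then have "b2 * \<Omega>p \<le> b2 * 1" using Om by linarith
    then show ?thesis using b2 by (simp only: mult_le_cancel_left_pos)
  qed
  have lowgen: "x \<ge> -1 \<Longrightarrow> 2 * b2 * x + b1^2 = - sq \<Longrightarrow> False" for x
  proof -
    assume x: "x \<ge> -1" and e: "2 * b2 * x + b1^2 = - sq"
    have "2 * b2 * x \<ge> - 2 * b2" using mult_left_mono[OF x, of b2] b2 by simp
    then have "sq \<le> 2 * b2 - b1^2" using e by linarith
    then have "sq^2 \<le> (2 * b2 - b1^2)^2" using sqpos by (intro power_mono) auto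
    moreover have "(2 * b2 - b1^2)^2 - \<delta> = - 4 * b1^2 * (b2 - b0)" using assms(4) by (simp add: algebra_simps power2_eq_square)
    moreover have "4 * b1^2 * (b2 - b0) > 0" using hb b1sq by simp
    ultimately show False using sq2 by linarith
  qed
  have low: "\<Omega>p \<ge> -1"
  proof (rule ccontr)
    assume "\<not> \<Omega>p \<ge> -1"
    then have om1: "\<Omega>p < -1" by simp
    then have "2 * b2 * \<Omega>p < - 2 * b2" using mult_strict_left_mono[OF om1, of b2] b2 by (simp add: mult.commute)
    then have "sq < b1^2 - 2 * b2" using Om by linarith
    then have "sq^2 < (b1^2 - 2 * b2)^2" using sqpos by (intro power_strict_mono) auto
    moreover have "(b1^2 - 2 * b2)^2 - \<delta> = - 4 * b1^2 * (b2 - b0)" using assms(4) by (simp add: algebra_simps power2_eq_square)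
    moreover have "4 * b1^2 * (b2 - b0) > 0" using hb b1sq by simp
    ultimately show False using sq2 by linarith
  qed
  define C where "C = cos (2 * \<omega>0 * \<tau>)"
  define S where "S = sin (2 * \<omega>0 * \<tau>)"
  have CO: "C = \<Omega>p"
  proof -
    obtain j :: int and \<sigma> :: real where sig: "\<sigma> \<in> {1, -1}" and e: "2 * \<tau> * \<omega>0 = \<sigma> * arccos \<Omega>p + 2 * pi * of_int j"
      using ex by blast
    have "C = cos (\<sigma> * arccos \<Omega>p + 2 * pi * of_int j)" unfolding C_def e[symmetric] by (simp add: mult_ac)
    also have "\<dots> = cos (\<sigma> * arccos \<Omega>p)" by (simp add: cos_add)
    also have "\<dots> = \<Omega>p" using sig up low by auto
    finally show ?thesis .
  qed
  have quad: "b2^2 * x^2 + b1^2 * b2 * x + b1^2 * b0 - b2^2 = 0 \<longleftrightarrow> (2 * b2 * x + b1^2)^2 = \<delta>" for x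
  proof -
    have e: "(2 * b2 * x + b1^2)^2 = \<delta> + 4 * (b2^2 * x^2 + b1^2 * b2 * x + b1^2 * b0 - b2^2)"
      using assms(4) by (simp add: algebra_simps power2_eq_square)
    have g: "\<And>q d::real. (q = 0) = (d + 4 * q = d)" by simp
    show ?thesis unfolding e by (rule g)
  qed
  have fC: "b2^2 * C^2 + b1^2 * b2 * C + b1^2 * b0 - b2^2 = 0"
    unfolding quad CO Om sq2 ..
  have b1S: "b1 * S > 0" using sg b1 unfolding S_def
    by (auto simp: sgn_if zero_less_mult_iff split: if_splits)
  have Sne: "S \<noteq> 0" using b1S by auto
  have gam: "\<gamma>0 = b1 * \<omega>0 / (b2 * S)" using g unfolding S_def .
  have gpos: "\<gamma>0 > 0"
  proof -
    have "\<gamma>0 = (b1 * S) * \<omega>0 / (b2 * S^2)" unfolding gam using Sne by (simp add: field_simps power2_eq_square)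
    then show ?thesis using b1S w b2 Sne by simp
  qed
  have I: "b1 * \<omega>0 = \<gamma>0 * b2 * S" unfolding gam using Sne b2 by simp
  have wform: "\<omega>0 = \<gamma>0 * b2 * S / b1" using I b1 by (simp add: field_simps)
  have Rgen: "b1^2 * y^2 = b1^2 * \<gamma>0^2 * (b0 + b2 * c) \<longleftrightarrow> b2^2 * c^2 + b1^2 * b2 * c + b1^2 * b0 - b2^2 = 0"
    if "b1 * y = \<gamma>0 * b2 * s" "s^2 = 1 - c^2" for y c s
  proof -
    have "b1^2 * y^2 = \<gamma>0^2 * b2^2 * (1 - c^2)"
    proof -
      have "(b1 * y)^2 = (\<gamma>0 * b2 * s)^2" using that(1) by simp
      then have "b1^2 * y^2 = \<gamma>0^2 * b2^2 * s^2" by (simp add: power_mult_distrib)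
      then show ?thesis using that(2) by simp
    qed
    then have "b1^2 * y^2 - b1^2 * \<gamma>0^2 * (b0 + b2 * c) = - (\<gamma>0^2 * (b2^2 * c^2 + b1^2 * b2 * c + b1^2 * b0 - b2^2))"
      by (simp add: algebra_simps power2_eq_square)
    note e = this
    have g: "\<And>X Y F (k::real). k \<noteq> 0 \<Longrightarrow> X - Y = - (k * F) \<Longrightarrow> (X = Y) = (F = 0)" by auto
    show ?thesis by (rule g[OF _ e]) (use gpos in simp)
  qed
  have R: "\<omega>0^2 = \<gamma>0^2 * (b0 + b2 * C)"
  proof -
    have "b1^2 * \<omega>0^2 = b1^2 * \<gamma>0^2 * (b0 + b2 * C)"
      using Rgen[OF I, of C] fC unfolding S_def C_def by (simp add: sin_squared_eq)
    then show ?thesis using b1sq by (simp add: mult.assoc)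
  qed
  have P: "2 * \<omega>0^2 + \<gamma>0^2 * (b1^2 - 2 * b0) > 0"
  proof -
    have "2 * \<omega>0^2 + \<gamma>0^2 * (b1^2 - 2 * b0) = \<gamma>0^2 * (2 * b2 * C + b1^2)"
      unfolding R by (simp add: algebra_simps)
    also have "\<dots> = \<gamma>0^2 * sq" unfolding CO Om ..
    finally show ?thesis using gpos sqpos by simp
  qed
  have other: "n^2 = 1" if h1: "(of_int n * \<omega>0)^2 = \<gamma>0^2 * (b0 + b2 * cos (of_int n * \<omega>0 * (s0 + 1)))"
     and h2: "b1 * (of_int n * \<omega>0) = \<gamma>0 * b2 * sin (of_int n * \<omega>0 * (s0 + 1))" for n :: int
  proof -
    define c where "c = cos (of_int n * \<omega>0 * (s0 + 1))"
    have f: "b2^2 * c^2 + b1^2 * b2 * c + b1^2 * b0 - b2^2 = 0"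
      using Rgen[OF h2, of c] h1 unfolding c_def by (simp add: sin_squared_eq)
    then have "(2 * b2 * c + b1^2)^2 = sq^2" unfolding quad sq2 .
    then have "2 * b2 * c + b1^2 = sq \<or> 2 * b2 * c + b1^2 = - sq"
      by (rule iffD1[OF power2_eq_iff])
    moreover have "c \<ge> -1" unfolding c_def by simp
    ultimately have "2 * b2 * c + b1^2 = sq" using lowgen by blast
    then have "b2 * c = b2 * \<Omega>p" using Om by linarith
    then have "c = C" using CO b2 by simp
    then have "(of_int n * \<omega>0)^2 = \<omega>0^2" using h1 R unfolding c_def by simp
    then have "(of_int n)^2 * \<omega>0^2 = 1 * \<omega>0^2" by (simp add: power_mult_distrib)
    then have "(of_int n :: real)^2 = 1" using w by simp
    then show ?thesis by (metis of_int_eq_1_iff of_int_power)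
  qed
  show ?thesis using gpos R I P other unfolding th C_def S_def by blast
qed



lemma case2:
  fixes b0 b1 b2 \<tau> s0 \<gamma>0 \<omega>0 :: real
  assumes tau: "\<tau> > 0" and s0: "s0 + 1 = 2 * \<tau>" and b10: "b1 = b0 + 1"
    and "b1 = 0" and "b2 > 1" and k: "k \<ge> 1"
    and g: "\<gamma>0 = real k * pi / (\<tau> * sqrt (b2 - 1))" and w: "\<omega>0 = real k * pi / \<tau>"
  shows "\<gamma>0 > 0 \<and> \<omega>0 > 0 \<and> \<omega>0^2 = \<gamma>0^2 * (b0 + b2 * cos (\<omega>0 * (s0 + 1)))
     \<and> b1 * \<omega>0 = \<gamma>0 * b2 * sin (\<omega>0 * (s0 + 1))
     \<and> 2 * \<omega>0^2 + \<gamma>0^2 * (b1^2 - 2 * b0) > 0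
     \<and> (\<forall>n::int. (of_int n * \<omega>0)^2 = \<gamma>0^2 * (b0 + b2 * cos (of_int n * \<omega>0 * (s0 + 1)))
          \<and> b1 * (of_int n * \<omega>0) = \<gamma>0 * b2 * sin (of_int n * \<omega>0 * (s0 + 1)) \<longrightarrow> n^2 = 1)"
proof -
  have b0: "b0 = -1" using assms(3,4) by simp
  have sq: "sqrt (b2 - 1) > 0" using assms(5) by simp
  have kpos: "real k * pi > 0" using k by simp
  have gpos: "\<gamma>0 > 0" unfolding g using tau sq kpos by simp
  have wpos: "\<omega>0 > 0" unfolding w using tau kpos by simp
  have wg: "\<omega>0 = \<gamma>0 * sqrt (b2 - 1)" unfolding g w using sq by simp
  have cosn: "cos (of_int n * \<omega>0 * (s0 + 1)) = 1" for n :: int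
  proof -
    have e: "of_int n * \<omega>0 * (s0 + 1) = (2 * pi) * of_int (n * int k)" unfolding w s0 using tau by simp
    show ?thesis unfolding e by (rule cos_int_2pin)
  qed
  have wsq: "\<omega>0^2 = \<gamma>0^2 * (b2 - 1)" unfolding wg using assms(5) by (simp add: power_mult_distrib)
  have R: "\<omega>0^2 = \<gamma>0^2 * (b0 + b2 * cos (\<omega>0 * (s0 + 1)))"
    using cosn[of 1] wsq b0 by simp
  have sin0: "sin (\<omega>0 * (s0 + 1)) = 0"
    using cosn[of 1] by (simp add: sin_squared_eq) (metis cos_one_sin_zero)
  have other: "n^2 = 1" if h1: "(of_int n * \<omega>0)^2 = \<gamma>0^2 * (b0 + b2 * cos (of_int n * \<omega>0 * (s0 + 1)))" for n :: int
  proof -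
    have "(of_int n)^2 * \<omega>0^2 = 1 * \<omega>0^2" using h1 cosn[of n] wsq b0 by (simp add: power_mult_distrib)
    then have "(of_int n :: real)^2 = 1" using wpos by simp
    then show ?thesis by (metis of_int_eq_1_iff of_int_power)
  qed
  have I: "b1 * \<omega>0 = \<gamma>0 * b2 * sin (\<omega>0 * (s0 + 1))" using sin0 assms(4) by simp
  have P: "2 * \<omega>0^2 + \<gamma>0^2 * (b1^2 - 2 * b0) > 0" using wpos gpos b0 assms(4) by (simp add: add_pos_pos)
  show ?thesis using gpos wpos R I P other by blast
qed


theorem proposition1:
  fixes a b c s0 u0 v0 b0 b1 b2 \<tau> \<delta> \<Omega>p \<gamma>0 \<omega>0 :: real
  assumes "a > 0" and "b > 0" and "c \<ge> 0" and "s0 > 1"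
    and "u0 > 0" and "v0 > 0"
    and "u0^3 + c * u0 = (a + 1) / b * u0^2 + a * c / b"
    and "v0 = u0^2 + c"
    and "b0 = b - 2 * u0 / v0" and "b1 = b0 + 1" and "b2 = 2 * u0^3 / v0^2"
    and "\<tau> = (s0 + 1) / 2"
    and "\<delta> = b1^2 * (b1^2 - 4 * b0) + 4 * b2^2"
    and "\<Omega>p = (- (b1^2) + sqrt \<delta>) / (2 * b2)"
    and cases:
      "(b1 \<noteq> 0 \<and> b0^2 - b2^2 < 0 \<and>
         (\<exists>j::int. \<exists>\<sigma>\<in>{1, -1::real}. 2 * \<tau> * \<omega>0 = \<sigma> * arccos \<Omega>p + 2 * pi * of_int j) \<and>
         \<omega>0 > 0 \<and> sgn (sin (2 * \<omega>0 * \<tau>)) = sgn b1 \<and>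
         \<gamma>0 = b1 * \<omega>0 / (b2 * sin (2 * \<omega>0 * \<tau>)))
       \<or>
       (b1 = 0 \<and> b2 > 1 \<and>
         (\<exists>k::nat. k \<ge> 1 \<and> \<gamma>0 = real k * pi / (\<tau> * sqrt (b2 - 1)) \<and> \<omega>0 = real k * pi / \<tau>))"
  shows "char_fun b u0 v0 s0 (\<i> * complex_of_real \<omega>0) \<gamma>0 = 0
    \<and> deriv (\<lambda>l. char_fun b u0 v0 s0 l \<gamma>0) (\<i> * complex_of_real \<omega>0) \<noteq> 0
    \<and> Re (dlam_dgam (char_fun b u0 v0 s0) (\<i> * complex_of_real \<omega>0) \<gamma>0)
        = (4 * \<tau> * \<gamma>0 * \<omega>0^4 + 2 * \<tau> * \<gamma>0^3 * \<omega>0^2 * (b1^2 - 2 * b0))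
          / ((\<gamma>0^2 * b1 - 2 * \<gamma>0 * \<tau> * \<omega>0^2 + 2 * \<gamma>0^3 * \<tau> * b0)^2
             + (2 * \<gamma>0 * \<omega>0 + 2 * \<gamma>0^2 * \<tau> * b1 * \<omega>0)^2)
    \<and> (4 * \<tau> * \<gamma>0 * \<omega>0^4 + 2 * \<tau> * \<gamma>0^3 * \<omega>0^2 * (b1^2 - 2 * b0))
          / ((\<gamma>0^2 * b1 - 2 * \<gamma>0 * \<tau> * \<omega>0^2 + 2 * \<gamma>0^3 * \<tau> * b0)^2
             + (2 * \<gamma>0 * \<omega>0 + 2 * \<gamma>0^2 * \<tau> * b1 * \<omega>0)^2) > 0
    \<and> (\<forall>n::int. n \<notin> {1, -1} \<longrightarrow>
         char_fun b u0 v0 s0 (of_int n * \<i> * complex_of_real \<omega>0) \<gamma>0 \<noteq> 0)"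
proof -
  have v0: "v0 \<noteq> 0" using assms(6) by simp
  have b2pos: "b2 > 0" using assms(5,6,11) by simp
  have tau: "\<tau> > 0" using assms(4,12) by simp
  have s0e: "s0 + 1 = 2 * \<tau>" using assms(12) by simp
  have CF: "\<And>l g. char_fun b u0 v0 s0 l g = FF b0 b1 b2 s0 l (of_real g)"
    using char_fun_FF[OF v0] assms(9,10,11) by simp
  have core: "\<gamma>0 > 0 \<and> \<omega>0 > 0 \<and> \<omega>0^2 = \<gamma>0^2 * (b0 + b2 * cos (\<omega>0 * (s0 + 1)))
     \<and> b1 * \<omega>0 = \<gamma>0 * b2 * sin (\<omega>0 * (s0 + 1))
     \<and> 2 * \<omega>0^2 + \<gamma>0^2 * (b1^2 - 2 * b0) > 0
     \<and> (\<forall>n::int. (of_int n * \<omega>0)^2 = \<gamma>0^2 * (b0 + b2 * cos (of_int n * \<omega>0 * (s0 + 1)))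
          \<and> b1 * (of_int n * \<omega>0) = \<gamma>0 * b2 * sin (of_int n * \<omega>0 * (s0 + 1)) \<longrightarrow> n^2 = 1)"
  proof (cases "b1 \<noteq> 0 \<and> b0^2 - b2^2 < 0 \<and>
         (\<exists>j::int. \<exists>\<sigma>\<in>{1, -1::real}. 2 * \<tau> * \<omega>0 = \<sigma> * arccos \<Omega>p + 2 * pi * of_int j) \<and>
         \<omega>0 > 0 \<and> sgn (sin (2 * \<omega>0 * \<tau>)) = sgn b1 \<and>
         \<gamma>0 = b1 * \<omega>0 / (b2 * sin (2 * \<omega>0 * \<tau>))")
    case True
    then show ?thesis using case1[OF b2pos tau s0e assms(13,14)] by blast
  next
    case False
    then obtain k :: nat where "b1 = 0" "b2 > 1" "k \<ge> 1" "\<gamma>0 = real k * pi / (\<tau> * sqrt (b2 - 1))"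
      "\<omega>0 = real k * pi / \<tau>" using cases by blast
    then show ?thesis using case2[OF tau s0e assms(10)] by blast
  qed
  then have gpos: "\<gamma>0 > 0" and wpos: "\<omega>0 > 0"
    and R: "\<omega>0^2 = \<gamma>0^2 * (b0 + b2 * cos (\<omega>0 * (s0 + 1)))"
    and I: "b1 * \<omega>0 = \<gamma>0 * b2 * sin (\<omega>0 * (s0 + 1))"
    and P: "2 * \<omega>0^2 + \<gamma>0^2 * (b1^2 - 2 * b0) > 0"
    and other: "\<And>n::int. (of_int n * \<omega>0)^2 = \<gamma>0^2 * (b0 + b2 * cos (of_int n * \<omega>0 * (s0 + 1)))
          \<Longrightarrow> b1 * (of_int n * \<omega>0) = \<gamma>0 * b2 * sin (of_int n * \<omega>0 * (s0 + 1)) \<Longrightarrow> n^2 = 1"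
    by blast+
  have root_iff: "char_fun b u0 v0 s0 (\<i> * complex_of_real w) \<gamma>0 = 0 \<longleftrightarrow>
      (w^2 = \<gamma>0^2 * (b0 + b2 * cos (w * (s0 + 1))) \<and> b1 * w = \<gamma>0 * b2 * sin (w * (s0 + 1)))" for w
  proof -
    have "char_fun b u0 v0 s0 (\<i> * complex_of_real w) \<gamma>0 = 0 \<longleftrightarrow>
       (\<gamma>0^2 * b0 + \<gamma>0^2 * b2 * cos (w * (s0+1)) - w^2 = 0 \<and> \<gamma>0 * b1 * w - \<gamma>0^2 * b2 * sin (w * (s0+1)) = 0)"
      unfolding CF FF_iw by (simp add: complex_eq_iff)
    also have "\<dots> \<longleftrightarrow> (w^2 = \<gamma>0^2 * (b0 + b2 * cos (w * (s0 + 1))) \<and> \<gamma>0 * (b1 * w) = \<gamma>0 * (\<gamma>0 * b2 * sin (w * (s0 + 1))))"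
      by (simp add: algebra_simps power2_eq_square) metis
    also have "\<dots> \<longleftrightarrow> (w^2 = \<gamma>0^2 * (b0 + b2 * cos (w * (s0 + 1))) \<and> b1 * w = \<gamma>0 * b2 * sin (w * (s0 + 1)))"
      using gpos by simp
    finally show ?thesis .
  qed
  have root: "char_fun b u0 v0 s0 (\<i> * complex_of_real \<omega>0) \<gamma>0 = 0" using root_iff R I by blast
  have dl: "deriv (\<lambda>l. char_fun b u0 v0 s0 l \<gamma>0) (\<i> * complex_of_real \<omega>0)
     = Complex (\<gamma>0 * b1 - \<gamma>0^2 * b2 * (2 * \<tau>) * cos (\<omega>0 * (s0 + 1))) (2 * \<omega>0 + \<gamma>0^2 * b2 * (2 * \<tau>) * sin (\<omega>0 * (s0 + 1)))"
    unfolding CF by (subst DERIV_imp_deriv[OF FF_dl]) (simp only: dl_iw, simp only: s0e)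
  have dg: "vector_derivative (\<lambda>g. char_fun b u0 v0 s0 (\<i> * complex_of_real \<omega>0) g) (at \<gamma>0)
     = Complex (2 * \<gamma>0 * b0 + 2 * \<gamma>0 * b2 * cos (\<omega>0 * (s0 + 1))) (b1 * \<omega>0 - 2 * \<gamma>0 * b2 * sin (\<omega>0 * (s0 + 1)))"
    unfolding CF by (subst vector_derivative_at[OF FF_dg]) (simp only: dg_iw)
  note T = transv[OF gpos wpos tau R I P]
  have last: "\<forall>n::int. n \<notin> {1, -1} \<longrightarrow>
         char_fun b u0 v0 s0 (of_int n * \<i> * complex_of_real \<omega>0) \<gamma>0 \<noteq> 0"
  proof (intro allI impI notI)
    fix n :: int
    assume n: "n \<notin> {1, -1}" and z: "char_fun b u0 v0 s0 (of_int n * \<i> * complex_of_real \<omega>0) \<gamma>0 = 0"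
    have "of_int n * \<i> * complex_of_real \<omega>0 = \<i> * complex_of_real (of_int n * \<omega>0)" by simp
    with z have "char_fun b u0 v0 s0 (\<i> * complex_of_real (of_int n * \<omega>0)) \<gamma>0 = 0" by simp
    then have "n^2 = 1" using other unfolding root_iff by (simp add: mult.assoc)
    then have "n = 1 \<or> n = -1" by (simp add: power2_eq_1_iff)
    then show False using n by simp
  qed
  show ?thesis unfolding dlam_dgam_def dl dg using root T last by simp
qed

end
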